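(* Consider a single base station serving $N$ static users $\mathrm{UE}_1,\ldots,\mathrm{UE}_N$ over slots $t=1,\ldots,T$. At each slot the base station schedules a transmission (of a fresh packet) to exactly one user. At each slot $t$, the channel state $\mathsf{Ch}_i(t)\in\{0,1\}$ (\textsf{Bad}$=0$, \textsf{Good}$=1$) of each user is chosen by an omniscient adversary, which may choose any of the $2^N$ state vectors at each slot; a scheduled transmission is received successfully iff the scheduled user's channel is \textsf{Good} in that slot, in which case that user's age resets to $1$, while every other age (and the scheduled user's age upon failure) increases by $1$. An online policy decides whom to schedule without any knowledge of current or future channel states (only of past outcomes). The cost of a policy on a channel-state sequence $\sigma\in(\{0,1\}^N)^T$ is $\sum_{t=1}^{T}\sum_{i=1}^{N}h_i(t)$, where $h_i(t)$ is the age of $\mathrm{UE}_i$ at slot $t$. The competitive ratio of an online policy $\mathcal{A}$ is $\eta^{\mathcal{A}}=\sup_{\sigma}\frac{\text{cost of }\mathcal{A}\text{ on }\sigma}{\text{cost of }\mathsf{OPT}\text{ on }\sigma}$, the supremum over all finite-length sequences $\sigma$, where $\mathsf{OPT}$ is the optimal offline policy knowing $\sigma$ in advance. Then the competitive ratio $\eta$ of any online scheduling policy with $N$ users satisfies $\eta\ge \frac{N}{2}+\frac{1}{2N}$. Moreover, for $N=2$ users, $\eta\ge 1.5$. *)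

theory Defs
  imports Complex_Main "HOL-Library.Extended_Real"
begin

(* Users are indexed 0..N-1; slots are indexed so that slot t+1 (t = 0,1,...)
   uses the channel-state vector  \<sigma> t  and the scheduling decision  s t.
   \<sigma> t i = True  means channel of user i is Good in that slot. *)

fun age :: "(nat \<Rightarrow> nat \<Rightarrow> bool) \<Rightarrow> (nat \<Rightarrow> nat) \<Rightarrow> nat \<Rightarrow> nat \<Rightarrow> nat" where
  "age \<sigma> s 0 i = 1"
| "age \<sigma> s (Suc t) i = (if s t = i \<and> \<sigma> t i then 1 else age \<sigma> s t i + 1)"

definition cost :: "nat \<Rightarrow> (nat \<Rightarrow> nat \<Rightarrow> bool) \<Rightarrow> (nat \<Rightarrow> nat) \<Rightarrow> nat \<Rightarrow> nat" where
  "cost N \<sigma> s T = (\<Sum>t\<in>{1..T}. \<Sum>i<N. age \<sigma> s t i)"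

definition valid_schedule :: "nat \<Rightarrow> (nat \<Rightarrow> nat) \<Rightarrow> bool" where
  "valid_schedule N s \<longleftrightarrow> (\<forall>t. s t < N)"

definition opt_cost :: "nat \<Rightarrow> (nat \<Rightarrow> nat \<Rightarrow> bool) \<Rightarrow> nat \<Rightarrow> nat" where
  "opt_cost N \<sigma> T = (INF s \<in> {s. valid_schedule N s}. cost N \<sigma> s T)"

text \<open>An online policy maps the history of past transmission outcomes
  (True = success) to the user scheduled next.\<close>
type_synonym policy = "bool list \<Rightarrow> nat"

definition valid_policy :: "nat \<Rightarrow> policy \<Rightarrow> bool" where
  "valid_policy N \<pi> \<longleftrightarrow> (\<forall>h. \<pi> h < N)"

fun outcomes :: "policy \<Rightarrow> (nat \<Rightarrow> nat \<Rightarrow> bool) \<Rightarrow> nat \<Rightarrow> bool list" where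
  "outcomes \<pi> \<sigma> 0 = []"
| "outcomes \<pi> \<sigma> (Suc t) = outcomes \<pi> \<sigma> t @ [\<sigma> t (\<pi> (outcomes \<pi> \<sigma> t))]"

definition online_schedule :: "policy \<Rightarrow> (nat \<Rightarrow> nat \<Rightarrow> bool) \<Rightarrow> nat \<Rightarrow> nat" where
  "online_schedule \<pi> \<sigma> t = \<pi> (outcomes \<pi> \<sigma> t)"

definition competitive_ratio :: "nat \<Rightarrow> policy \<Rightarrow> ereal" where
  "competitive_ratio N \<pi> =
     (SUP p \<in> (UNIV :: (nat \<times> (nat \<Rightarrow> nat \<Rightarrow> bool)) set).
        ereal (real (cost N (snd p) (online_schedule \<pi> (snd p)) (fst p))
               / real (opt_cost N (snd p) (fst p))))"

end

theory Submission
  imports Defs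
begin

definition pick :: "(nat \<Rightarrow> nat) \<Rightarrow> nat \<Rightarrow> nat \<Rightarrow> nat" where
  "pick a N u = (if \<exists>i<N. i \<noteq> u then SOME i. i < N \<and> i \<noteq> u \<and> (\<forall>j<N. j \<noteq> u \<longrightarrow> a j \<le> a i) else u)"

lemma pick_spec:
  assumes "\<exists>i<N. i \<noteq> u"
  shows "pick a N u < N \<and> pick a N u \<noteq> u \<and> (\<forall>j<N. j \<noteq> u \<longrightarrow> a j \<le> a (pick a N u))"
proof -
  let ?A = "{i. i < N \<and> i \<noteq> u}"
  have fin: "finite ?A" by simp
  have ne: "?A \<noteq> {}" using assms by auto
  have "Max (a ` ?A) \<in> a ` ?A" using fin ne by (intro Max_in) auto
  then obtain i where i: "i \<in> ?A" "a i = Max (a ` ?A)" by auto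
  have "\<forall>j<N. j \<noteq> u \<longrightarrow> a j \<le> a i" using i fin by auto
  then have "\<exists>i. i < N \<and> i \<noteq> u \<and> (\<forall>j<N. j \<noteq> u \<longrightarrow> a j \<le> a i)" using i by auto
  then have "(SOME i. i < N \<and> i \<noteq> u \<and> (\<forall>j<N. j \<noteq> u \<longrightarrow> a j \<le> a i)) < N \<and>
    (SOME i. i < N \<and> i \<noteq> u \<and> (\<forall>j<N. j \<noteq> u \<longrightarrow> a j \<le> a i)) \<noteq> u \<and>
    (\<forall>j<N. j \<noteq> u \<longrightarrow> a j \<le> a (SOME i. i < N \<and> i \<noteq> u \<and> (\<forall>j<N. j \<noteq> u \<longrightarrow> a j \<le> a i)))"
    by (rule someI_ex)
  then show ?thesis unfolding pick_def using assms by simp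
qed

fun st :: "nat \<Rightarrow> (nat \<Rightarrow> nat) \<Rightarrow> nat \<Rightarrow> nat \<Rightarrow> nat" where
  "st N u 0 i = 1"
| "st N u (Suc t) i = (if i = pick (st N u t) N (u t) \<and> i \<noteq> u t then 1 else st N u t i + 1)"

lemma st_le: "st N u t i \<le> t + 1"
  by (induction t) auto

lemma st_inv:
  "\<forall>J. J \<subseteq> {..<N} \<and> card J \<ge> 2 \<longrightarrow> (\<exists>i\<in>J. st N u t i + card J \<le> N + 2)"
proof (induction t)
  case 0
  show ?case
  proof (intro allI impI)
    fix J :: "nat set" assume J: "J \<subseteq> {..<N} \<and> card J \<ge> 2"
    then have "card J \<le> N" using card_mono[of "{..<N}" J] by auto
    moreover have "J \<noteq> {}" using J by auto
    ultimately show "\<exists>i\<in>J. st N u 0 i + card J \<le> N + 2" by auto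
  qed
next
  case (Suc t)
  show ?case
  proof (intro allI impI)
    fix J :: "nat set" assume J: "J \<subseteq> {..<N} \<and> card J \<ge> 2"
    have finJ: "finite J" using J finite_subset by blast
    have cJ: "card J \<le> N" using J card_mono[of "{..<N}" J] by auto
    obtain j where j: "j \<in> J" "j \<noteq> u t"
    proof -
      have "\<not> J \<subseteq> {u t}"
      proof
        assume "J \<subseteq> {u t}"
        then have "card J \<le> 1" using card_mono[of "{u t}" J] by auto
        then show False using J by auto
      qed
      then show ?thesis using that by auto
    qed
    have jN: "j < N" using j J by auto
    have ex: "\<exists>i<N. i \<noteq> u t" using j jN by auto
    define c where "c = pick (st N u t) N (u t)"
    have cs: "c < N" "c \<noteq> u t" "\<forall>j<N. j \<noteq> u t \<longrightarrow> st N u t j \<le> st N u t c"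
      using pick_spec[OF ex, of "st N u t"] unfolding c_def by auto
    show "\<exists>i\<in>J. st N u (Suc t) i + card J \<le> N + 2"
    proof (cases "c \<in> J")
      case True
      then show ?thesis using cs cJ by (intro bexI[of _ c]) (auto simp: c_def)
    next
      case False
      have J': "insert c J \<subseteq> {..<N} \<and> card (insert c J) \<ge> 2"
        using J cs finJ False by auto
      have cardJ': "card (insert c J) = card J + 1" using finJ False by simp
      obtain i where i: "i \<in> insert c J" "st N u t i + card (insert c J) \<le> N + 2"
        using Suc.IH J' by blast
      have upd: "\<And>k. k \<in> J \<Longrightarrow> st N u (Suc t) k = st N u t k + 1"
        using False by (auto simp: c_def[symmetric])
      show ?thesis
      proof (cases "i = c")
        case True
        have "st N u t j \<le> st N u t c" using cs j jN by auto
        then show ?thesis using i True cardJ' upd[OF j(1)] j by (intro bexI[of _ j]) auto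
      next
        case False
        then have "i \<in> J" using i by auto
        then show ?thesis using i cardJ' upd by (intro bexI[of _ i]) auto
      qed
    qed
  qed
qed

lemma st_sum:
  assumes "N \<ge> 1"
  shows "(\<Sum>i<N. st N u t i) \<le> t + 1 + (N - 1) * N"
proof -
  obtain i0 where i0: "i0 < N" "\<forall>j<N. j \<noteq> i0 \<longrightarrow> st N u t j \<le> N"
  proof (cases "\<exists>i<N. st N u t i > N")
    case True
    then obtain i0 where a: "i0 < N" "st N u t i0 > N" by auto
    have "\<forall>j<N. j \<noteq> i0 \<longrightarrow> st N u t j \<le> N"
    proof (intro allI impI)
      fix j assume "j < N" "j \<noteq> i0"
      then have "{i0, j} \<subseteq> {..<N} \<and> card {i0, j} \<ge> 2" using a by auto
      then obtain k where "k \<in> {i0, j}" "st N u t k + card {i0,j} \<le> N + 2"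
        using st_inv[of N u t] by blast
      then show "st N u t j \<le> N" using a \<open>j \<noteq> i0\<close> by auto
    qed
    then show ?thesis using that a by blast
  next
    case False
    then show ?thesis using that[of 0] assms by force
  qed
  have e1: "(\<Sum>i<N. st N u t i) = st N u t i0 + (\<Sum>i\<in>{..<N} - {i0}. st N u t i)"
    using i0 by (simp add: sum.remove)
  have e2: "(\<Sum>i\<in>{..<N} - {i0}. st N u t i) \<le> (\<Sum>i\<in>{..<N} - {i0}. N)"
    using i0 by (intro sum_mono) auto
  have e3: "(\<Sum>i\<in>{..<N} - {i0}. N) = (N - 1) * N" using i0 by simp
  show ?thesis using e1 e2 e3 st_le[of N u t i0] by linarith
qed

lemma age_st:
  "age (\<lambda>t i. i \<noteq> u t) (\<lambda>t. pick (st N u t) N (u t)) t i = st N u t i"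
  by (induction t arbitrary: i) auto

lemma age_pos: "age \<sigma> s t i \<ge> 1"
  by (induction t) auto

lemma sum2: "2 * (\<Sum>t\<in>{1..n}. t + 1) = (n::nat) * (n + 3)"
  by (induction n) (auto simp: algebra_simps)

theorem theorem4:
  fixes N :: nat and \<pi> :: policy
  assumes "N \<ge> 1" and "valid_policy N \<pi>"
  shows "competitive_ratio N \<pi> \<ge> ereal (real N / 2 + 1 / (2 * real N))
         \<and> (N = 2 \<longrightarrow> competitive_ratio N \<pi> \<ge> ereal (3 / 2))"
proof -
  define u where "u t = \<pi> (replicate t False)" for t
  define \<sigma> where "\<sigma> t i = (i \<noteq> u t)" for t i
  define T where "T = 4 * N^2"
  define S where "S = (\<Sum>t\<in>{1..T}. t + 1)"
  have out: "outcomes \<pi> \<sigma> t = replicate t False" for t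
    by (induction t) (auto simp: \<sigma>_def u_def replicate_append_same[symmetric])
  have os: "online_schedule \<pi> \<sigma> t = u t" for t
    by (simp add: online_schedule_def out u_def)
  have onl: "age \<sigma> (online_schedule \<pi> \<sigma>) t i = t + 1" for t i
    by (induction t) (auto simp: os, auto simp: \<sigma>_def)
  have con: "cost N \<sigma> (online_schedule \<pi> \<sigma>) T = N * S"
    unfolding cost_def onl S_def by (simp add: sum_distrib_left mult.commute)
  define so where "so t = pick (st N u t) N (u t)" for t
  have so_valid: "valid_schedule N so"
  proof -
    have "so t < N" for t
    proof (cases "\<exists>i<N. i \<noteq> u t")
      case True then show ?thesis using pick_spec[OF True, of "st N u t"] unfolding so_def by blast
    next
      case False
      have "u t < N" using assms(2) unfolding valid_policy_def u_def by blast
      moreover have "so t = u t" unfolding so_def pick_def using False by (simp only: if_False)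
      ultimately show ?thesis by simp
    qed
    then show ?thesis by (simp add: valid_schedule_def)
  qed
  have "cost N \<sigma> so T = (\<Sum>t\<in>{1..T}. \<Sum>i<N. st N u t i)"
  proof -
    have "age \<sigma> so t i = st N u t i" for t i
      unfolding \<sigma>_def so_def by (rule age_st)
    then show ?thesis unfolding cost_def by simp
  qed
  also have "\<dots> \<le> (\<Sum>t\<in>{1..T}. t + 1 + (N - 1) * N)"
    by (intro sum_mono st_sum assms(1))
  also have "\<dots> = S + T * ((N - 1) * N)"
    unfolding S_def sum.distrib by simp
  finally have costo: "cost N \<sigma> so T \<le> S + T * ((N - 1) * N)" .
  have optle: "opt_cost N \<sigma> T \<le> S + T * ((N - 1) * N)"
  proof -
    have "opt_cost N \<sigma> T \<le> cost N \<sigma> so T"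
      unfolding opt_cost_def by (rule cINF_lower) (simp_all add: so_valid)
    then show ?thesis using costo by linarith
  qed
  have Tpos: "T \<ge> 1" using assms(1) by (simp add: T_def)
  have costge: "cost N \<sigma> s T \<ge> 1" for s
  proof -
    have "age \<sigma> s 1 0 \<le> (\<Sum>i<N. age \<sigma> s 1 i)"
      using assms(1) by (intro member_le_sum) auto
    then have "(1::nat) \<le> (\<Sum>i<N. age \<sigma> s 1 i)"
      using age_pos[of \<sigma> s 1 0] by linarith
    also have "\<dots> \<le> cost N \<sigma> s T" unfolding cost_def
      using Tpos by (intro member_le_sum) auto
    finally show ?thesis .
  qed
  have optge: "opt_cost N \<sigma> T \<ge> 1"
    unfolding opt_cost_def using so_valid costge
    by (intro cINF_greatest) auto
  have S2: "2 * S = T * (T + 3)" unfolding S_def by (rule sum2)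
  have SgeR: "real S \<ge> 2 * real N ^ 2 * real T"
  proof -
    have "2 * S \<ge> T * T" using S2 by simp
    then have "real (2 * S) \<ge> real (T * T)" by linarith
    then show ?thesis unfolding T_def by (simp add: algebra_simps power2_eq_square)
  qed
  define x where "x = real N"
  define y where "y = real T"
  define s where "s = real S"
  define p where "p = real (opt_cost N \<sigma> T)"
  have x1: "x \<ge> 1" using assms(1) by (simp add: x_def)
  have y0: "y \<ge> 0" by (simp add: y_def)
  have p1: "p \<ge> 1" using optge by (simp add: p_def)
  have ple: "p \<le> s + y * ((x - 1) * x)"
  proof -
    have "real (opt_cost N \<sigma> T) \<le> real (S + T * ((N - 1) * N))" using optle by linarith
    then show ?thesis using assms(1) by (simp add: p_def s_def y_def x_def of_nat_diff)
  qed
  have sge: "s \<ge> 2 * x^2 * y" using SgeR by (simp add: s_def x_def y_def)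
  have ratio: "competitive_ratio N \<pi> \<ge> ereal ((x * s) / p)"
  proof -
    have "ereal (real (cost N (snd (T, \<sigma>)) (online_schedule \<pi> (snd (T, \<sigma>))) (fst (T, \<sigma>)))
               / real (opt_cost N (snd (T, \<sigma>)) (fst (T, \<sigma>)))) \<le> competitive_ratio N \<pi>"
      unfolding competitive_ratio_def by (rule SUP_upper) simp
    then show ?thesis using con by (simp add: x_def s_def p_def)
  qed
  have key1: "x * s \<ge> (x / 2 + 1 / (2 * x)) * p"
  proof -
    have a: "(x^2 - 1) * s \<ge> (x^2 - 1) * (2 * x^2 * y)"
      using sge one_le_power[OF x1, of 2] by (intro mult_left_mono) auto
    have b: "x * (x - 1) * y * (x^2 + 2 * x - 1) \<ge> 0"
    proof -
      have xx: "1 \<le> x^2" using one_le_power[OF x1, of 2] .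
      have q: "x^2 + 2 * x - 1 \<ge> 0" using xx x1 by linarith
      have "x * (x - 1) * y \<ge> 0" using x1 y0 by simp
      then show ?thesis using q by simp
    qed
    have c: "2 * x * x * s \<ge> (x^2 + 1) * (s + y * ((x - 1) * x))"
      using a b by (simp add: algebra_simps power2_eq_square power3_eq_cube) 
    have d: "(x^2 + 1) * (s + y * ((x - 1) * x)) \<ge> (x^2 + 1) * p"
      using ple by (intro mult_left_mono) auto
    have "(x / 2 + 1 / (2 * x)) * p = (x^2 + 1) * p / (2 * x)"
      using x1 by (simp add: field_simps power2_eq_square)
    also have "\<dots> \<le> 2 * x * x * s / (2 * x)" using c d x1 by (intro divide_right_mono) auto
    also have "\<dots> = x * s" using x1 by simp
    finally show ?thesis .
  qed
  have r1: "(x * s) / p \<ge> x / 2 + 1 / (2 * x)"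
    using key1 p1 by (simp add: pos_le_divide_eq)
  have r2: "N = 2 \<Longrightarrow> (x * s) / p \<ge> 3 / 2"
  proof -
    assume N2: "N = 2"
    then have x2: "x = 2" by (simp add: x_def)
    have "p \<le> s + 2 * y" using ple x2 by simp
    moreover have "s \<ge> 8 * y" using sge x2 by simp
    ultimately have "2 * s \<ge> 3 / 2 * p" using y0 by linarith
    then show ?thesis using p1 x2 by (simp add: pos_le_divide_eq)
  qed
  have g1: "ereal (x / 2 + 1 / (2 * x)) \<le> competitive_ratio N \<pi>"
    using ratio r1 order.trans ereal_less_eq(3) by blast
  have g2: "N = 2 \<longrightarrow> ereal (3 / 2) \<le> competitive_ratio N \<pi>"
    using ratio r2 order.trans ereal_less_eq(3) by blast
  show ?thesis using g1 g2 unfolding x_def by blast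
qed

end
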